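(* Let $f(x,y)=\sum_{i,j=-\infty}^{\infty}\lambda(i,j)x^iy^j$ be a nonzero bilateral formal series with complex coefficients. Then $f$ is self-orthogonal (i.e. $f\perp f$) if and only if there exist integers $m_0,k_0$ and complex sequences $\{p_i\}_{i\in\mathbb{Z}}$, $\{q_i\}_{i\in\mathbb{Z}}$ with $p_{m_0}=0$, $q_{k_0}=0$ and $p_{k_0}=-q_{m_0}\neq 0$, such that $$f(x,y)=P(x)Q(y)-P(y)Q(x),$$ where $P(x)=\sum_{i=-\infty}^{\infty}p_ix^i$ and $Q(x)=\frac{1}{q_{m_0}}\sum_{i=-\infty}^{\infty}q_ix^i$.
   Context: A bilateral formal series in $x,y$ is a formal expression $\sum_{i,j\in\mathbb{Z}}\lambda(i,j)x^iy^j$ with complex coefficients (no convergence required). For two such series $f,g$, the expression $g(u,v)f(z,w)-g(u,w)f(z,v)+g(v,w)f(z,u)$ is a well-defined formal series in four independent variables $u,v,w,z$ (each product involves series in disjoint sets of variables). One writes $f\perp g$ ("$f$ is orthogonal to $g$") if this expression is identically zero, and calls $f$ self-orthogonal if $f\perp f$. *)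

theory Defs
  imports Complex_Main
begin

text \<open>A bilateral formal series in x,y is represented by its coefficient function
  lambda :: int => int => complex (coefficient of x^i y^j); a bilateral series in one
  variable by its coefficient function int => complex.\<close>

type_synonym bseries2 = "int \<Rightarrow> int \<Rightarrow> complex"
type_synonym bseries1 = "int \<Rightarrow> complex"

text \<open>Coefficient of u^a v^b w^c z^d in g(u,v)f(z,w) - g(u,w)f(z,v) + g(v,w)f(z,u).\<close>
definition orth_expr :: "bseries2 \<Rightarrow> bseries2 \<Rightarrow> int \<Rightarrow> int \<Rightarrow> int \<Rightarrow> int \<Rightarrow> complex" where
  "orth_expr f g a b c d = g a b * f d c - g a c * f d b + g b c * f d a"

definition orthogonal :: "bseries2 \<Rightarrow> bseries2 \<Rightarrow> bool" (infix "\<bottom>\<^sub>s" 50) where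
  "f \<bottom>\<^sub>s g \<longleftrightarrow> (\<forall>a b c d. orth_expr f g a b c d = 0)"

definition self_orthogonal :: "bseries2 \<Rightarrow> bool" where
  "self_orthogonal f \<longleftrightarrow> f \<bottom>\<^sub>s f"

definition bscale :: "complex \<Rightarrow> bseries1 \<Rightarrow> bseries1" where
  "bscale c P = (\<lambda>i. c * P i)"

definition tensor :: "bseries1 \<Rightarrow> bseries1 \<Rightarrow> bseries2" where
  "tensor P Q = (\<lambda>i j. P i * Q j)"

end

theory Submission
  imports Defs
begin

lemma so_rel:
  assumes "self_orthogonal f"
  shows "f a b * f d c - f a c * f d b + f b c * f d a = 0"
  using assms unfolding self_orthogonal_def orthogonal_def orth_expr_def by blast

lemma so_diag:
  assumes "self_orthogonal f" "f d a \<noteq> 0"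
  shows "f b b = 0"
  using so_rel[OF assms(1), of a b d b] assms(2) by simp

lemma so_antisym:
  assumes "self_orthogonal f" "f x y \<noteq> 0"
  shows "f b a = - f a b"
proof (rule ccontr)
  assume ne: "f b a \<noteq> - f a b"
  have dg: "\<And>t. f t t = 0" using so_diag[OF assms] by blast
  have h1: "\<And>d. (f a b + f b a) * f d a = 0"
    using so_rel[OF assms(1), of a b _ a] dg by (simp add: algebra_simps)
  have h2: "\<And>c. (f a b + f b a) * f b c = 0"
    using so_rel[OF assms(1), of a b b] dg by (simp add: algebra_simps)
  have h3: "\<And>d. (f b a + f a b) * f d b = 0"
    using so_rel[OF assms(1), of b a _ b] dg by (simp add: algebra_simps)
  have nz: "f a b + f b a \<noteq> 0" using ne by (metis add.commute add_eq_0_iff)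
  have "f b a = 0" using h1[of b] nz by simp
  moreover have "f a b = 0" using h3[of a] nz by (simp add: add.commute)
  ultimately show False using ne by simp
qed

theorem theorem2p1:
  fixes f :: bseries2
  assumes "f \<noteq> (\<lambda>i j. 0)"
  shows "self_orthogonal f \<longleftrightarrow>
    (\<exists>(m0::int) (k0::int) (p::bseries1) (q::bseries1).
       p m0 = 0 \<and> q k0 = 0 \<and> p k0 = - q m0 \<and> q m0 \<noteq> 0 \<and>
       (let P = p; Q = bscale (1 / q m0) q in
          f = (\<lambda>i j. tensor P Q i j - tensor P Q j i)))"
proof
  assume so: "self_orthogonal f"
  obtain m0 k0 where nz: "f m0 k0 \<noteq> 0" using assms by blast
  have dg: "\<And>t. f t t = 0" using so_diag[OF so nz] by blast
  have as: "\<And>a b. f b a = - f a b" using so_antisym[OF so nz] by blast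
  define c where "c = f m0 k0"
  have cnz: "c \<noteq> 0" using nz c_def by simp
  define p where "p = (\<lambda>i. - f m0 i)"
  define q where "q = (\<lambda>j. f j k0)"
  have key: "f i j = p i * (bscale (1 / q m0) q j) - p j * (bscale (1 / q m0) q i)" for i j
  proof -
    have r: "f i j * f m0 k0 - f i k0 * f m0 j + f j k0 * f m0 i = 0"
      using so_rel[OF so, of i j m0 k0] .
    have "f i j * c = f i k0 * f m0 j - f j k0 * f m0 i" using r c_def
      by (simp add: algebra_simps)
    then have "f i j = (f i k0 * f m0 j - f j k0 * f m0 i) / c" using cnz
      by (simp add: eq_divide_eq)
    also have "\<dots> = (- f m0 i) * ((1 / c) * f j k0) - (- f m0 j) * ((1 / c) * f i k0)"
      by (simp add: diff_divide_distrib algebra_simps)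
    finally show ?thesis unfolding p_def q_def bscale_def c_def by (simp only:)
  qed
  show "\<exists>(m0::int) (k0::int) (p::bseries1) (q::bseries1).
       p m0 = 0 \<and> q k0 = 0 \<and> p k0 = - q m0 \<and> q m0 \<noteq> 0 \<and>
       (let P = p; Q = bscale (1 / q m0) q in
          f = (\<lambda>i j. tensor P Q i j - tensor P Q j i))"
  proof (intro exI conjI)
    show "p m0 = 0" unfolding p_def using dg by simp
    show "q k0 = 0" unfolding q_def using dg by simp
    show "p k0 = - q m0" unfolding p_def q_def by simp
    show "q m0 \<noteq> 0" unfolding q_def using nz by simp
    show "let P = p; Q = bscale (1 / q m0) q in
          f = (\<lambda>i j. tensor P Q i j - tensor P Q j i)"
      unfolding Let_def tensor_def by (intro ext) (rule key)
  qed
next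
  assume "\<exists>(m0::int) (k0::int) (p::bseries1) (q::bseries1).
       p m0 = 0 \<and> q k0 = 0 \<and> p k0 = - q m0 \<and> q m0 \<noteq> 0 \<and>
       (let P = p; Q = bscale (1 / q m0) q in
          f = (\<lambda>i j. tensor P Q i j - tensor P Q j i))"
  then obtain P Q where f: "f = (\<lambda>i j. P i * Q j - P j * Q i)"
    unfolding Let_def tensor_def by blast
  show "self_orthogonal f"
    unfolding self_orthogonal_def orthogonal_def orth_expr_def f
    by (simp add: algebra_simps)
qed

end
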